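(* Let $X_1,\dots,X_n$ be mutually independent random variables with given distributions on ranges $D_1,\dots,D_n$ and product distribution $\mu$, and let $A_1,\dots,A_m$ be events, $A_i$ determined by the variables indexed by $\mathrm{vbl}(A_i)\subseteq[n]$, with dependency graph $G$ on $[m]$ (distinct $i,j$ adjacent iff $\mathrm{vbl}(A_i)\cap\mathrm{vbl}(A_j)\neq\emptyset$); for $S\subseteq[m]$ let $\Gamma^+(S)$ be $S$ together with its neighbours in $G$. Run the General Partial Rejection Sampling algorithm: draw all variables independently; in round $t=1,2,\dots$, with current assignment $\sigma_t$, if no $A_i$ occurs stop and output $\sigma_t$; otherwise let $S_t=\mathrm{Res}(\sigma_t)$ and independently resample all variables in $\bigcup_{i\in S_t}\mathrm{vbl}(A_i)$, giving $\sigma_{t+1}$. Let $\ell\ge1$ and let $S_1,\dots,S_\ell$ be a possible log (the algorithm has not stopped in the first $\ell$ rounds and its resampling sets are $S_1,\dots,S_\ell$, an event of positive probability). Conditioned on this log, $\sigma_{\ell+1}$ is distributed as $\mu$ conditioned on $\bigwedge_{i\notin\Gamma^+(S_\ell)}\overline{A_i}$.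
   Context: Notation: $\mathrm{Bad}(\sigma)=\{i:\sigma\in A_i\}$; $\partial S=\{i\notin S: i\text{ adjacent to some }j\in S\}$; $\mathrm{vbl}(S)=\bigcup_{i\in S}\mathrm{vbl}(A_i)$. We write $A_i\cap\sigma_S=\emptyset$ if either $\mathrm{vbl}(A_i)\cap\mathrm{vbl}(S)=\emptyset$ or no assignment agreeing with $\sigma$ on $\mathrm{vbl}(A_i)\cap\mathrm{vbl}(S)$ belongs to $A_i$; otherwise $A_i\cap\sigma_S\ne\emptyset$. $\mathrm{Res}(\sigma)$ is the output of: start with $R=\mathrm{Bad}(\sigma)$, $N=\emptyset$; while $\partial R\setminus N\neq\emptyset$, for each $i\in\partial R\setminus N$ (with $R$ the current set) put $i$ into $R$ if $A_i\cap\sigma_R\ne\emptyset$ and into $N$ otherwise; output $R$. *)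

theory Defs
  imports "HOL-Probability.Probability" "HOL-Library.While_Combinator"
begin

text \<open>Variables X_0..X_{n-1} (indexed by {..<n}) with distributions p j; assignments are
  functions nat => 'a. Events A_0..A_{m-1} (indexed by {..<m}) with variable sets vbl i.\<close>

definition mu :: "nat \<Rightarrow> (nat \<Rightarrow> 'a pmf) \<Rightarrow> (nat \<Rightarrow> 'a) pmf" where
  "mu n p = Pi_pmf {..<n} undefined p"

definition Bad :: "nat \<Rightarrow> (nat \<Rightarrow> (nat \<Rightarrow> 'a) set) \<Rightarrow> (nat \<Rightarrow> 'a) \<Rightarrow> nat set" where
  "Bad m A \<sigma> = {i \<in> {..<m}. \<sigma> \<in> A i}"

definition adj :: "(nat \<Rightarrow> nat set) \<Rightarrow> nat \<Rightarrow> nat \<Rightarrow> bool" where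
  "adj vbl i j \<longleftrightarrow> i \<noteq> j \<and> vbl i \<inter> vbl j \<noteq> {}"

definition bdry :: "nat \<Rightarrow> (nat \<Rightarrow> nat set) \<Rightarrow> nat set \<Rightarrow> nat set" where
  "bdry m vbl S = {i \<in> {..<m}. i \<notin> S \<and> (\<exists>j\<in>S. adj vbl i j)}"

definition Gamma_plus :: "nat \<Rightarrow> (nat \<Rightarrow> nat set) \<Rightarrow> nat set \<Rightarrow> nat set" where
  "Gamma_plus m vbl S = S \<union> bdry m vbl S"

definition vbls :: "(nat \<Rightarrow> nat set) \<Rightarrow> nat set \<Rightarrow> nat set" where
  "vbls vbl S = \<Union> (vbl ` S)"

text \<open>compat ... i sigma S  means  A_i \<inter> sigma_S \<noteq> {}\<close>
definition compat :: "nat \<Rightarrow> (nat \<Rightarrow> 'a pmf) \<Rightarrow> (nat \<Rightarrow> nat set) \<Rightarrow> (nat \<Rightarrow> (nat \<Rightarrow> 'a) set)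
    \<Rightarrow> nat \<Rightarrow> (nat \<Rightarrow> 'a) \<Rightarrow> nat set \<Rightarrow> bool" where
  "compat n p vbl A i \<sigma> S \<longleftrightarrow>
     vbl i \<inter> vbls vbl S \<noteq> {} \<and>
     (\<exists>\<tau>. (\<forall>j<n. \<tau> j \<in> set_pmf (p j)) \<and> (\<forall>j \<in> vbl i \<inter> vbls vbl S. \<tau> j = \<sigma> j) \<and> \<tau> \<in> A i)"

definition res_inner :: "nat \<Rightarrow> (nat \<Rightarrow> 'a pmf) \<Rightarrow> (nat \<Rightarrow> nat set) \<Rightarrow> (nat \<Rightarrow> (nat \<Rightarrow> 'a) set)
    \<Rightarrow> (nat \<Rightarrow> 'a) \<Rightarrow> nat \<Rightarrow> nat set \<times> nat set \<Rightarrow> nat set \<times> nat set" where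
  "res_inner n p vbl A \<sigma> i RN =
     (if compat n p vbl A i \<sigma> (fst RN) then (insert i (fst RN), snd RN) else (fst RN, insert i (snd RN)))"

text \<open>One pass of the while loop: the for-loop over \<partial>R - N (computed at the start of the pass),
  processed in increasing index order, each test using the current R.\<close>
definition res_step :: "nat \<Rightarrow> nat \<Rightarrow> (nat \<Rightarrow> 'a pmf) \<Rightarrow> (nat \<Rightarrow> nat set) \<Rightarrow> (nat \<Rightarrow> (nat \<Rightarrow> 'a) set)
    \<Rightarrow> (nat \<Rightarrow> 'a) \<Rightarrow> nat set \<times> nat set \<Rightarrow> nat set \<times> nat set" where
  "res_step n m p vbl A \<sigma> RN =
     fold (res_inner n p vbl A \<sigma>) (sorted_list_of_set (bdry m vbl (fst RN) - snd RN)) RN"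

definition Res :: "nat \<Rightarrow> nat \<Rightarrow> (nat \<Rightarrow> 'a pmf) \<Rightarrow> (nat \<Rightarrow> nat set) \<Rightarrow> (nat \<Rightarrow> (nat \<Rightarrow> 'a) set)
    \<Rightarrow> (nat \<Rightarrow> 'a) \<Rightarrow> nat set" where
  "Res n m p vbl A \<sigma> =
     fst (while (\<lambda>RN. bdry m vbl (fst RN) - snd RN \<noteq> {}) (res_step n m p vbl A \<sigma>) (Bad m A \<sigma>, {}))"

definition gprs_step :: "nat \<Rightarrow> nat \<Rightarrow> (nat \<Rightarrow> 'a pmf) \<Rightarrow> (nat \<Rightarrow> nat set) \<Rightarrow> (nat \<Rightarrow> (nat \<Rightarrow> 'a) set)
    \<Rightarrow> (nat \<Rightarrow> 'a) \<Rightarrow> (nat \<Rightarrow> 'a) pmf" where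
  "gprs_step n m p vbl A \<sigma> =
     (if Bad m A \<sigma> = {} then return_pmf \<sigma>
      else map_pmf (\<lambda>\<tau> j. if j \<in> vbls vbl (Res n m p vbl A \<sigma>) then \<tau> j else \<sigma> j) (mu n p))"

text \<open>gprs_run ... k is the joint law of the list [sigma_1, ..., sigma_(k+1)].\<close>
primrec gprs_run :: "nat \<Rightarrow> nat \<Rightarrow> (nat \<Rightarrow> 'a pmf) \<Rightarrow> (nat \<Rightarrow> nat set) \<Rightarrow> (nat \<Rightarrow> (nat \<Rightarrow> 'a) set)
    \<Rightarrow> nat \<Rightarrow> (nat \<Rightarrow> 'a) list pmf" where
  "gprs_run n m p vbl A 0 = map_pmf (\<lambda>\<sigma>. [\<sigma>]) (mu n p)"
| "gprs_run n m p vbl A (Suc k) =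
     bind_pmf (gprs_run n m p vbl A k)
       (\<lambda>xs. map_pmf (\<lambda>\<sigma>. xs @ [\<sigma>]) (gprs_step n m p vbl A (last xs)))"

definition log_event :: "nat \<Rightarrow> nat \<Rightarrow> (nat \<Rightarrow> 'a pmf) \<Rightarrow> (nat \<Rightarrow> nat set) \<Rightarrow> (nat \<Rightarrow> (nat \<Rightarrow> 'a) set)
    \<Rightarrow> nat \<Rightarrow> (nat \<Rightarrow> nat set) \<Rightarrow> (nat \<Rightarrow> 'a) list set" where
  "log_event n m p vbl A l S =
     {xs. \<forall>t \<in> {1..l}. Bad m A (xs ! (t - 1)) \<noteq> {} \<and> Res n m p vbl A (xs ! (t - 1)) = S t}"

end

theory Submission
  imports Defs
begin

lemma measure_cond_pmf:
  assumes "set_pmf p \<inter> s \<noteq> {}"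
  shows "measure (measure_pmf (cond_pmf p s)) B = measure p (s \<inter> B) / measure p s"
proof -
  have ne: "emeasure (measure_pmf p) s \<noteq> 0"
    using assms by (simp add: emeasure_measure_pmf_not_zero)
  show ?thesis
    unfolding cond_pmf.rep_eq[OF assms]
    by (rule measure_uniform_measure[OF ne]) (simp_all add: measure_pmf.emeasure_finite)
qed

lemma cond_pmf_cong_set:
  assumes "set_pmf p \<inter> s = set_pmf p \<inter> t" "set_pmf p \<inter> s \<noteq> {}"
  shows "cond_pmf p s = cond_pmf p t"
proof (rule pmf_eqI)
  fix x
  have t: "set_pmf p \<inter> t \<noteq> {}" using assms by simp
  have m: "measure p s = measure p t"
    using measure_Int_set_pmf[of p s] measure_Int_set_pmf[of p t] assms(1) by (simp add: Int_commute)
  show "pmf (cond_pmf p s) x = pmf (cond_pmf p t) x"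
    unfolding pmf_cond[OF assms(2)] pmf_cond[OF t] m
    using assms(1) by (auto simp: set_pmf_eq)
qed

lemma cond_cond_pmf:
  assumes "set_pmf p \<inter> A \<inter> B \<noteq> {}"
  shows "cond_pmf (cond_pmf p A) B = cond_pmf p (A \<inter> B)"
proof (rule pmf_eqI)
  fix x
  have a: "set_pmf p \<inter> A \<noteq> {}" using assms by blast
  have ab: "set_pmf (cond_pmf p A) \<inter> B \<noteq> {}" using assms by (simp add: set_cond_pmf[OF a])
  have ab': "set_pmf p \<inter> (A \<inter> B) \<noteq> {}" using assms by (simp add: Int_assoc)
  have pos: "measure p A > 0" using a by (auto intro: measure_pmf_posI)
  show "pmf (cond_pmf (cond_pmf p A) B) x = pmf (cond_pmf p (A \<inter> B)) x"
    unfolding pmf_cond[OF ab] pmf_cond[OF ab'] pmf_cond[OF a] measure_cond_pmf[OF a]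
    using pos by auto
qed

lemma cond_pmf_UNIV: "cond_pmf p UNIV = p"
proof (rule pmf_eqI)
  fix i
  have ne: "set_pmf p \<inter> UNIV \<noteq> {}" using set_pmf_not_empty[of p] by simp
  show "pmf (cond_pmf p UNIV) i = pmf p i" unfolding pmf_cond[OF ne] by simp
qed

lemma cond_pair_pmf:
  assumes "set_pmf P \<inter> C \<noteq> {}" "set_pmf Q \<inter> F \<noteq> {}"
  shows "cond_pmf (pair_pmf P Q) (C \<times> F) = pair_pmf (cond_pmf P C) (cond_pmf Q F)"
proof (rule pmf_eqI)
  fix z :: "'a \<times> 'b"
  obtain a b where z: "z = (a, b)" by (cases z)
  have cf: "set_pmf (pair_pmf P Q) \<inter> (C \<times> F) \<noteq> {}" using assms by auto
  have "measure (pair_pmf P Q) (C \<times> F) = measure (pair_pmf P Q) ((C \<inter> set_pmf P) \<times> (F \<inter> set_pmf Q))"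
    using measure_Int_set_pmf[of "pair_pmf P Q" "C \<times> F"] measure_Int_set_pmf[of "pair_pmf P Q" "(C \<inter> set_pmf P) \<times> (F \<inter> set_pmf Q)"]
    by (simp add: Times_Int_Times Int_ac)
  also have "\<dots> = measure P (C \<inter> set_pmf P) * measure Q (F \<inter> set_pmf Q)"
    by (rule measure_pmf_prob_product) (auto intro: countable_subset[OF _ countable_set_pmf])
  also have "\<dots> = measure P C * measure Q F" by (simp add: measure_Int_set_pmf)
  finally have m: "measure (pair_pmf P Q) (C \<times> F) = measure P C * measure Q F" .
  show "pmf (cond_pmf (pair_pmf P Q) (C \<times> F)) z = pmf (pair_pmf (cond_pmf P C) (cond_pmf Q F)) z"
    unfolding z pmf_cond[OF cf] pmf_pair pmf_cond[OF assms(1)] pmf_cond[OF assms(2)] m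
    by auto
qed

lemma cond_bind_prefix:
  assumes "\<forall>x\<in>set_pmf M. \<forall>y. (g x y \<in> B \<longleftrightarrow> x \<in> B')" "set_pmf M \<inter> B' \<noteq> {}"
  shows "cond_pmf (bind_pmf M (\<lambda>x. map_pmf (g x) (K x))) B = bind_pmf (cond_pmf M B') (\<lambda>x. map_pmf (g x) (K x))"
proof (rule pmf_eqI)
  fix z
  let ?F = "\<lambda>x. map_pmf (g x) (K x)"
  obtain x0 where x0: "x0 \<in> set_pmf M" "x0 \<in> B'" using assms(2) by blast
  obtain y0 where y0: "y0 \<in> set_pmf (K x0)" using set_pmf_not_empty[of "K x0"] by blast
  have ne: "set_pmf (bind_pmf M ?F) \<inter> B \<noteq> {}"
  proof -
    have "g x0 y0 \<in> B" using assms(1) x0 by blast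
    moreover have "g x0 y0 \<in> set_pmf (bind_pmf M ?F)" using x0 y0 by auto
    ultimately show ?thesis by blast
  qed
  have meas: "measure (bind_pmf M ?F) B = measure M B'"
  proof -
    have "measure (bind_pmf M ?F) B = (\<integral>x. measure (?F x) B \<partial>M)"
      by (simp add: measure_pmf_bind measure_pmf.measure_bind[where N="count_space UNIV"]
          measure_pmf_in_subprob_algebra)
    also have "\<dots> = (\<integral>x. indicator B' x \<partial>M)"
    proof (rule integral_cong_AE)
      show "AE x in measure_pmf M. measure (?F x) B = indicator B' x"
        unfolding AE_measure_pmf_iff
      proof
        fix x assume x: "x \<in> set_pmf M"
        have "g x -` B = (if x \<in> B' then UNIV else {})" using assms(1) x by auto
        then show "measure (?F x) B = indicator B' x" by (simp add: indicator_def)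
      qed
    qed simp_all
    also have "\<dots> = measure M B'" by simp
    finally show ?thesis .
  qed
  have pos: "measure M B' > 0" using x0 by (auto intro: measure_pmf_posI)
  have "ennreal (pmf (bind_pmf (cond_pmf M B') ?F) z) =
      (\<integral>\<^sup>+x. ennreal (pmf (?F x) z) * indicator B' x \<partial>M) / emeasure M B'"
    unfolding ennreal_pmf_bind cond_pmf.rep_eq[OF assms(2)]
    by (simp add: nn_integral_uniform_measure)
  also have "(\<integral>\<^sup>+x. ennreal (pmf (?F x) z) * indicator B' x \<partial>M) =
       (\<integral>\<^sup>+x. ennreal (if z \<in> B then pmf (?F x) z else 0) \<partial>M)"
  proof (rule nn_integral_cong_AE)
    show "AE x in measure_pmf M. ennreal (pmf (?F x) z) * indicator B' x = ennreal (if z \<in> B then pmf (?F x) z else 0)"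
      unfolding AE_measure_pmf_iff
    proof
      fix x assume x: "x \<in> set_pmf M"
      show "ennreal (pmf (?F x) z) * indicator B' x = ennreal (if z \<in> B then pmf (?F x) z else 0)"
      proof (cases "x \<in> B'")
        case True
        then have "z \<notin> B \<Longrightarrow> pmf (?F x) z = 0"
          using assms(1) x by (auto simp: pmf_eq_0_set_pmf)
        then show ?thesis using True by auto
      next
        case False
        then have "z \<in> B \<Longrightarrow> pmf (?F x) z = 0"
          using assms(1) x by (auto simp: pmf_eq_0_set_pmf)
        then show ?thesis using False by auto
      qed
    qed
  qed
  also have "\<dots> = ennreal (if z \<in> B then pmf (bind_pmf M ?F) z else 0)"
    by (cases "z \<in> B") (simp_all add: ennreal_pmf_bind)
  finally have "ennreal (pmf (bind_pmf (cond_pmf M B') ?F) z) =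
     ennreal (if z \<in> B then pmf (bind_pmf M ?F) z else 0) / ennreal (measure M B')"
    by (simp add: measure_pmf.emeasure_eq_measure)
  also have "\<dots> = ennreal (pmf (cond_pmf (bind_pmf M ?F) B) z)"
    unfolding pmf_cond[OF ne] meas using pos
    by (simp add: divide_ennreal pmf_nonneg)
  finally show "pmf (cond_pmf (bind_pmf M ?F) B) z = pmf (bind_pmf (cond_pmf M B') ?F) z"
    by (simp add: pmf_nonneg)
qed



lemma bdry_sub: "bdry m vbl R \<subseteq> {..<m}" by (auto simp: bdry_def)
lemma bdry_disj: "bdry m vbl R \<inter> R = {}" by (auto simp: bdry_def)
lemma bdry_vbl: "i \<in> bdry m vbl R \<Longrightarrow> vbl i \<inter> vbls vbl R \<noteq> {}"
  by (auto simp: bdry_def adj_def vbls_def)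
lemma vbls_mono: "R \<subseteq> R' \<Longrightarrow> vbls vbl R \<subseteq> vbls vbl R'"
  by (auto simp: vbls_def)

lemma fold_inner_un:
  "fst (fold (res_inner n p vbl A \<sigma>) L s) \<union> snd (fold (res_inner n p vbl A \<sigma>) L s)
     = fst s \<union> snd s \<union> set L"
  by (induction L arbitrary: s) (auto simp: res_inner_def)

lemma fold_inner_mono:
  "fst s \<subseteq> fst (fold (res_inner n p vbl A \<sigma>) L s) \<and> snd s \<subseteq> snd (fold (res_inner n p vbl A \<sigma>) L s)"
proof (induction L arbitrary: s)
  case (Cons a L)
  from Cons[of "res_inner n p vbl A \<sigma> a s"] show ?case by (auto simp: res_inner_def split: if_splits)
qed simp

lemma fold_inner_loc:
  assumes "\<And>R' i. R' \<subseteq> X \<Longrightarrow> compat n p vbl A i \<sigma> R' = compat n p vbl A i \<rho> R'"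
    and "fst (fold (res_inner n p vbl A \<rho>) L s) \<subseteq> X"
  shows "fold (res_inner n p vbl A \<sigma>) L s = fold (res_inner n p vbl A \<rho>) L s"
  using assms(2)
proof (induction L arbitrary: s)
  case (Cons a L)
  have "fst s \<subseteq> fst (res_inner n p vbl A \<rho> a s)" by (auto simp: res_inner_def)
  also have "\<dots> \<subseteq> fst (fold (res_inner n p vbl A \<rho>) L (res_inner n p vbl A \<rho> a s))"
    using fold_inner_mono by blast
  finally have "fst s \<subseteq> X" using Cons.prems by simp
  hence "res_inner n p vbl A \<sigma> a s = res_inner n p vbl A \<rho> a s"
    using assms(1) by (simp add: res_inner_def)
  with Cons show ?case by simp
qed simp

definition Ninv where
  "Ninv n p vbl A \<sigma> s \<longleftrightarrow> (\<forall>i\<in>snd s. \<exists>R'\<subseteq>fst s. vbl i \<inter> vbls vbl R' \<noteq> {} \<and> \<not> compat n p vbl A i \<sigma> R')"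

lemma fold_inner_Ninv:
  assumes "\<forall>a\<in>set L. vbl a \<inter> vbls vbl (fst s) \<noteq> {}" and "Ninv n p vbl A \<sigma> s"
  shows "Ninv n p vbl A \<sigma> (fold (res_inner n p vbl A \<sigma>) L s)"
  using assms
proof (induction L arbitrary: s)
  case (Cons a L)
  let ?s = "res_inner n p vbl A \<sigma> a s"
  have sub: "fst s \<subseteq> fst ?s" by (auto simp: res_inner_def)
  have "Ninv n p vbl A \<sigma> ?s"
    using Cons.prems sub unfolding Ninv_def res_inner_def by (auto split: if_splits) blast+
  moreover have "\<forall>a\<in>set L. vbl a \<inter> vbls vbl (fst ?s) \<noteq> {}"
    using Cons.prems(1) vbls_mono[OF sub, of vbl] by auto
  ultimately show ?case using Cons.IH by simp
qed simp

context
  fixes n m :: nat and p :: "nat \<Rightarrow> 'a pmf" and vbl :: "nat \<Rightarrow> nat set"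
    and A :: "nat \<Rightarrow> (nat \<Rightarrow> 'a) set"
begin

abbreviation "bb \<equiv> (\<lambda>RN. bdry m vbl (fst RN) - snd RN \<noteq> {})"

lemma res_step_un:
  "fst (res_step n m p vbl A \<sigma> s) \<union> snd (res_step n m p vbl A \<sigma> s) =
     fst s \<union> snd s \<union> (bdry m vbl (fst s) - snd s)"
proof -
  have fin: "finite (bdry m vbl (fst s) - snd s)"
    by (rule finite_subset[OF _ finite_lessThan[of m]]) (use bdry_sub[of m vbl "fst s"] in blast)
  show ?thesis unfolding res_step_def fold_inner_un using fin by simp
qed

lemma res_step_mono:
  "fst s \<subseteq> fst (res_step n m p vbl A \<sigma> s)" "snd s \<subseteq> snd (res_step n m p vbl A \<sigma> s)"
  unfolding res_step_def using fold_inner_mono by blast+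

lemma res_step_sub:
  "fst s \<union> snd s \<subseteq> {..<m} \<Longrightarrow> fst (res_step n m p vbl A \<sigma> s) \<union> snd (res_step n m p vbl A \<sigma> s) \<subseteq> {..<m}"
  using res_step_un[of \<sigma> s] bdry_sub[of m vbl "fst s"] by auto

lemma res_step_card:
  assumes "fst s \<union> snd s \<subseteq> {..<m}" "bb s"
  shows "m - card (fst (res_step n m p vbl A \<sigma> s) \<union> snd (res_step n m p vbl A \<sigma> s))
           < m - card (fst s \<union> snd s)"
proof -
  let ?T = "fst (res_step n m p vbl A \<sigma> s) \<union> snd (res_step n m p vbl A \<sigma> s)"
  have T: "?T \<subseteq> {..<m}" using res_step_sub assms(1) by blast
  obtain x where x: "x \<in> bdry m vbl (fst s) - snd s" using assms(2) by blast
  have xn: "x \<notin> fst s \<union> snd s" using x bdry_disj[of m vbl "fst s"] by blast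
  have xT: "x \<in> ?T" using x unfolding res_step_un by blast
  have "fst s \<union> snd s \<subseteq> ?T" unfolding res_step_un by blast
  hence ps: "fst s \<union> snd s \<subset> ?T" using xn xT by blast
  have "card (fst s \<union> snd s) < card ?T"
    by (rule psubset_card_mono[OF finite_subset[OF T finite_lessThan] ps])
  moreover have "card ?T \<le> m" using card_mono[OF finite_lessThan T] by simp
  ultimately show ?thesis by linarith
qed

lemma res_while_induct:
  assumes "fst s \<union> snd s \<subseteq> {..<m}"
    and step: "\<And>s. fst s \<union> snd s \<subseteq> {..<m} \<Longrightarrow> (bb s \<Longrightarrow> P (res_step n m p vbl A \<sigma> s)) \<Longrightarrow> P s"
  shows "P s"
  using assms(1)
proof (induction "m - card (fst s \<union> snd s)" arbitrary: s rule: less_induct)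
  case less
  show ?case
  proof (rule step[OF less.prems])
    assume "bb s"
    show "P (res_step n m p vbl A \<sigma> s)"
      using less.hyps res_step_card[OF less.prems \<open>bb s\<close>] res_step_sub[OF less.prems] by blast
  qed
qed

lemma while_mono:
  assumes "fst s \<union> snd s \<subseteq> {..<m}"
  shows "fst s \<subseteq> fst (while bb (res_step n m p vbl A \<sigma>) s)"
proof (rule res_while_induct[of s "\<lambda>s. fst s \<subseteq> fst (while bb (res_step n m p vbl A \<sigma>) s)" \<sigma>, OF assms])
  fix s assume "fst s \<union> snd s \<subseteq> {..<m}"
    and IH: "bb s \<Longrightarrow> fst (res_step n m p vbl A \<sigma> s) \<subseteq> fst (while bb (res_step n m p vbl A \<sigma>) (res_step n m p vbl A \<sigma> s))"
  show "fst s \<subseteq> fst (while bb (res_step n m p vbl A \<sigma>) s)"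
  proof (cases "bb s")
    case True
    have e: "while bb (res_step n m p vbl A \<sigma>) s = while bb (res_step n m p vbl A \<sigma>) (res_step n m p vbl A \<sigma> s)"
      by (subst while_unfold[of bb "res_step n m p vbl A \<sigma>" s]) (rule if_P[OF True])
    show ?thesis unfolding e using IH[OF True] res_step_mono(1)[of s \<sigma>] by (rule order_trans[rotated])
  next
    case False
    have e: "while bb (res_step n m p vbl A \<sigma>) s = s"
      by (subst while_unfold[of bb "res_step n m p vbl A \<sigma>" s]) (rule if_not_P[OF False])
    show ?thesis unfolding e by simp
  qed
qed


lemma while_props:
  assumes "fst s \<union> snd s \<subseteq> {..<m}" "Ninv n p vbl A \<sigma> s"
  shows "fst (while bb (res_step n m p vbl A \<sigma>) s) \<union> snd (while bb (res_step n m p vbl A \<sigma>) s) \<subseteq> {..<m}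
       \<and> Ninv n p vbl A \<sigma> (while bb (res_step n m p vbl A \<sigma>) s)
       \<and> \<not> bb (while bb (res_step n m p vbl A \<sigma>) s)"
proof -
  let ?c = "res_step n m p vbl A \<sigma>"
  let ?P = "\<lambda>s. Ninv n p vbl A \<sigma> s \<longrightarrow> fst (while bb ?c s) \<union> snd (while bb ?c s) \<subseteq> {..<m}
       \<and> Ninv n p vbl A \<sigma> (while bb ?c s) \<and> \<not> bb (while bb ?c s)"
  have "?P s"
  proof (rule res_while_induct[of s ?P \<sigma>, OF assms(1)])
    fix s assume sub: "fst s \<union> snd s \<subseteq> {..<m}" and IH: "bb s \<Longrightarrow> ?P (?c s)"
    show "?P s"
    proof (cases "bb s")
      case True
      have e: "while bb ?c s = while bb ?c (?c s)"
        by (subst while_unfold[of bb ?c s]) (rule if_P[OF True])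
      have "Ninv n p vbl A \<sigma> s \<Longrightarrow> Ninv n p vbl A \<sigma> (?c s)"
        unfolding res_step_def
        apply (rule fold_inner_Ninv)
        using bdry_vbl bdry_sub[of m vbl "fst s"] finite_subset[OF _ finite_lessThan]
        by (auto simp: set_sorted_list_of_set)
      then show ?thesis unfolding e using IH[OF True] by blast
    next
      case False
      have e: "while bb ?c s = s"
        by (subst while_unfold[of bb ?c s]) (rule if_not_P[OF False])
      show ?thesis unfolding e using sub False by blast
    qed
  qed
  thus ?thesis using assms(2) by blast
qed

lemma Bad_sub: "Bad m A \<sigma> \<subseteq> {..<m}" by (auto simp: Bad_def)

lemma Res_props:
  "Bad m A \<sigma> \<subseteq> Res n m p vbl A \<sigma>"
  "Res n m p vbl A \<sigma> \<subseteq> {..<m}"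
  "bdry m vbl (Res n m p vbl A \<sigma>) \<subseteq> snd (while bb (res_step n m p vbl A \<sigma>) (Bad m A \<sigma>, {}))"
  "Ninv n p vbl A \<sigma> (while bb (res_step n m p vbl A \<sigma>) (Bad m A \<sigma>, {}))"
proof -
  have s: "fst (Bad m A \<sigma>, ({}::nat set)) \<union> snd (Bad m A \<sigma>, ({}::nat set)) \<subseteq> {..<m}" using Bad_sub by simp
  have N: "Ninv n p vbl A \<sigma> (Bad m A \<sigma>, {})" by (simp add: Ninv_def)
  from while_props[OF s N] while_mono[OF s, of \<sigma>]
  show "Bad m A \<sigma> \<subseteq> Res n m p vbl A \<sigma>"
  "Res n m p vbl A \<sigma> \<subseteq> {..<m}"
  "bdry m vbl (Res n m p vbl A \<sigma>) \<subseteq> snd (while bb (res_step n m p vbl A \<sigma>) (Bad m A \<sigma>, {}))"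
  "Ninv n p vbl A \<sigma> (while bb (res_step n m p vbl A \<sigma>) (Bad m A \<sigma>, {}))"
    unfolding Res_def by auto
qed

lemma Res_bdry_not:
  assumes "i \<in> bdry m vbl (Res n m p vbl A \<rho>)" "\<forall>j<n. \<sigma>' j \<in> set_pmf (p j)"
    "\<forall>j\<in>vbls vbl (Res n m p vbl A \<rho>). \<sigma>' j = \<rho> j"
  shows "\<sigma>' \<notin> A i"
proof -
  let ?W = "while bb (res_step n m p vbl A \<rho>) (Bad m A \<rho>, {})"
  have "i \<in> snd ?W" using Res_props(3) assms(1) by blast
  then obtain R' where R': "R' \<subseteq> fst ?W" "vbl i \<inter> vbls vbl R' \<noteq> {}" "\<not> compat n p vbl A i \<rho> R'"
    using Res_props(4)[of \<rho>] unfolding Ninv_def by blast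
  have "vbls vbl R' \<subseteq> vbls vbl (Res n m p vbl A \<rho>)"
    using R'(1) vbls_mono unfolding Res_def by blast
  then show ?thesis using R' assms(2,3) unfolding compat_def by blast
qed

lemma compat_cong:
  "\<forall>j\<in>vbl i \<inter> vbls vbl R'. \<sigma> j = \<rho> j \<Longrightarrow> compat n p vbl A i \<sigma> R' = compat n p vbl A i \<rho> R'"
  unfolding compat_def by auto

lemma res_step_loc:
  assumes "\<And>R' i. R' \<subseteq> X \<Longrightarrow> compat n p vbl A i \<sigma> R' = compat n p vbl A i \<rho> R'"
    "fst (res_step n m p vbl A \<rho> s) \<subseteq> X"
  shows "res_step n m p vbl A \<sigma> s = res_step n m p vbl A \<rho> s"
  unfolding res_step_def by (rule fold_inner_loc[OF assms(1) assms(2)[unfolded res_step_def]])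

lemma Res_loc:
  assumes "Bad m A \<sigma> = Bad m A \<rho>" "\<forall>j\<in>vbls vbl (Res n m p vbl A \<rho>). \<sigma> j = \<rho> j"
  shows "Res n m p vbl A \<sigma> = Res n m p vbl A \<rho>"
proof -
  let ?c = "res_step n m p vbl A \<sigma>" and ?cz = "res_step n m p vbl A \<rho>"
  let ?Wz = "while bb ?cz (Bad m A \<rho>, {})"
  let ?P = "\<lambda>s. while bb ?cz s = ?Wz \<longrightarrow> while bb ?c s = ?Wz"
  have comp: "\<And>R' i. R' \<subseteq> fst ?Wz \<Longrightarrow> compat n p vbl A i \<sigma> R' = compat n p vbl A i \<rho> R'"
  proof -
    fix R' i assume "R' \<subseteq> fst ?Wz"
    hence "vbls vbl R' \<subseteq> vbls vbl (Res n m p vbl A \<rho>)" using vbls_mono unfolding Res_def by blast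
    thus "compat n p vbl A i \<sigma> R' = compat n p vbl A i \<rho> R'" using assms(2) by (intro compat_cong) blast
  qed
  have s: "fst (Bad m A \<rho>, ({}::nat set)) \<union> snd (Bad m A \<rho>, ({}::nat set)) \<subseteq> {..<m}" using Bad_sub by simp
  have "?P (Bad m A \<rho>, {})"
  proof (rule res_while_induct[of _ ?P \<rho>, OF s])
    fix s assume sub: "fst s \<union> snd s \<subseteq> {..<m}" and IH: "bb s \<Longrightarrow> ?P (?cz s)"
    show "?P s"
    proof (cases "bb s")
      case True
      have e: "while bb ?cz s = while bb ?cz (?cz s)"
        by (subst while_unfold[of bb ?cz s]) (rule if_P[OF True])
      have e': "while bb ?c s = while bb ?c (?c s)"
        by (subst while_unfold[of bb ?c s]) (rule if_P[OF True])
      show ?thesis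
      proof
        assume W: "while bb ?cz s = ?Wz"
        have fs: "fst (?cz s) \<subseteq> fst ?Wz"
          using while_mono[OF res_step_sub[OF sub], of \<rho> \<rho>] W e by simp
        have cc: "?c s = ?cz s" by (rule res_step_loc[OF comp fs])
        show "while bb ?c s = ?Wz" unfolding e' cc using IH[OF True] W e by simp
      qed
    next
      case False
      have e: "while bb ?cz s = s" "while bb ?c s = s"
        by (subst while_unfold[of bb _ s], rule if_not_P[OF False])+
      show ?thesis unfolding e by simp
    qed
  qed
  thus ?thesis unfolding Res_def assms(1) by simp
qed

end



lemma mu_split:
  assumes "V \<subseteq> {..<n}"
  shows "mu n p = map_pmf (\<lambda>(f,g) x. if x \<in> V then f x else g x)
            (pair_pmf (Pi_pmf V undefined p) (Pi_pmf ({..<n} - V) undefined p))"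
proof -
  have "{..<n} = V \<union> ({..<n} - V)" using assms by blast
  then have "mu n p = Pi_pmf (V \<union> ({..<n} - V)) undefined p" unfolding mu_def by simp
  also have "\<dots> = map_pmf (\<lambda>(f,g) x. if x \<in> V then f x else g x)
            (pair_pmf (Pi_pmf V undefined p) (Pi_pmf ({..<n} - V) undefined p))"
    using assms by (intro Pi_pmf_union) (auto intro: finite_subset)
  finally show ?thesis .
qed

lemma core_resample:
  fixes C F :: "(nat \<Rightarrow> 'a) set"
  assumes V: "V \<subseteq> {..<n}"
    and C: "\<And>\<sigma> \<sigma>'. (\<forall>j\<in>V. \<sigma> j = \<sigma>' j) \<Longrightarrow> \<sigma> \<in> C \<longleftrightarrow> \<sigma>' \<in> C"
    and F: "\<And>\<sigma> \<sigma>'. (\<forall>j. j \<notin> V \<longrightarrow> \<sigma> j = \<sigma>' j) \<Longrightarrow> \<sigma> \<in> F \<longleftrightarrow> \<sigma>' \<in> F"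
    and ne: "set_pmf (mu n p) \<inter> (C \<inter> F) \<noteq> {}"
  shows "bind_pmf (cond_pmf (mu n p) (C \<inter> F)) (\<lambda>\<sigma>. map_pmf (\<lambda>\<tau> j. if j \<in> V then \<tau> j else \<sigma> j) (mu n p))
         = cond_pmf (mu n p) F"
proof -
  define mrg :: "(nat \<Rightarrow> 'a) \<times> (nat \<Rightarrow> 'a) \<Rightarrow> nat \<Rightarrow> 'a" where
    "mrg = (\<lambda>(f,g) x. if x \<in> V then f x else g x)"
  define P where "P = Pi_pmf V undefined p"
  define Q where "Q = Pi_pmf ({..<n} - V) undefined p"
  have mu: "mu n p = map_pmf mrg (pair_pmf P Q)"
    unfolding mrg_def P_def Q_def by (rule mu_split[OF V])
  have preCF: "mrg -` (C \<inter> F) = C \<times> F"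
  proof (intro set_eqI, clarify)
    fix f g
    have "mrg (f,g) \<in> C \<longleftrightarrow> f \<in> C" by (rule C) (simp add: mrg_def)
    moreover have "mrg (f,g) \<in> F \<longleftrightarrow> g \<in> F" by (rule F) (simp add: mrg_def)
    ultimately show "((f, g) \<in> mrg -` (C \<inter> F)) = ((f, g) \<in> C \<times> F)" by auto
  qed
  have preF: "mrg -` F = UNIV \<times> F"
  proof (intro set_eqI, clarify)
    fix f g
    have "mrg (f,g) \<in> F \<longleftrightarrow> g \<in> F" by (rule F) (simp add: mrg_def)
    then show "((f, g) \<in> mrg -` F) = ((f, g) \<in> UNIV \<times> F)" by auto
  qed
  obtain f0 g0 where fg: "f0 \<in> set_pmf P" "g0 \<in> set_pmf Q" "(f0, g0) \<in> C \<times> F"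
    using ne unfolding mu preCF[symmetric] by auto
  have neP: "set_pmf P \<inter> C \<noteq> {}" and neQ: "set_pmf Q \<inter> F \<noteq> {}" using fg by auto
  have ne1: "set_pmf (pair_pmf P Q) \<inter> mrg -` (C \<inter> F) \<noteq> {}" unfolding preCF using fg by auto
  have ne2: "set_pmf (pair_pmf P Q) \<inter> mrg -` F \<noteq> {}" unfolding preF using fg by auto
  have neU: "set_pmf P \<inter> UNIV \<noteq> {}" using fg by auto
  have L1: "cond_pmf (mu n p) (C \<inter> F) = map_pmf mrg (pair_pmf (cond_pmf P C) (cond_pmf Q F))"
    unfolding mu cond_map_pmf[OF ne1] preCF cond_pair_pmf[OF neP neQ] ..
  have R1: "cond_pmf (mu n p) F = map_pmf mrg (pair_pmf P (cond_pmf Q F))"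
    unfolding mu cond_map_pmf[OF ne2] preF cond_pair_pmf[OF neU neQ] cond_pmf_UNIV ..
  let ?X = "cond_pmf P C" and ?Y = "cond_pmf Q F"
  have "bind_pmf (cond_pmf (mu n p) (C \<inter> F)) (\<lambda>\<sigma>. map_pmf (\<lambda>\<tau> j. if j \<in> V then \<tau> j else \<sigma> j) (mu n p))
      = bind_pmf (pair_pmf ?X ?Y) (\<lambda>fg. map_pmf (\<lambda>f'. mrg (f', snd fg)) P)"
    unfolding L1 bind_map_pmf
  proof (intro bind_pmf_cong refl)
    fix fg :: "(nat \<Rightarrow> 'a) \<times> (nat \<Rightarrow> 'a)"
    have "map_pmf (\<lambda>\<tau> j. if j \<in> V then \<tau> j else mrg fg j) (mu n p)
        = map_pmf (\<lambda>x. mrg (fst x, snd fg)) (pair_pmf P Q)"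
      unfolding mu map_pmf_comp by (intro map_pmf_cong refl) (auto simp: mrg_def fun_eq_iff split: prod.splits)
    also have "\<dots> = map_pmf (\<lambda>f'. mrg (f', snd fg)) (map_pmf fst (pair_pmf P Q))"
      by (simp add: map_pmf_comp)
    finally show "map_pmf (\<lambda>\<tau> j. if j \<in> V then \<tau> j else mrg fg j) (mu n p) = map_pmf (\<lambda>f'. mrg (f', snd fg)) P"
      by (simp add: map_fst_pair_pmf)
  qed
  also have "\<dots> = bind_pmf (map_pmf snd (pair_pmf ?X ?Y)) (\<lambda>g. map_pmf (\<lambda>f'. mrg (f', g)) P)"
    by (simp add: bind_map_pmf)
  also have "\<dots> = bind_pmf ?Y (\<lambda>g. map_pmf (\<lambda>f'. mrg (f', g)) P)"
    by (simp add: map_snd_pair_pmf)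
  also have "\<dots> = map_pmf mrg (pair_pmf P ?Y)"
    unfolding pair_pmf_def map_bind_pmf map_pmf_def
    by (subst bind_commute_pmf) (simp add: bind_return_pmf bind_assoc_pmf)
  also have "\<dots> = cond_pmf (mu n p) F" using R1 by simp
  finally show ?thesis .
qed



definition EE :: "(nat \<Rightarrow> (nat \<Rightarrow> 'a) set) \<Rightarrow> nat set \<Rightarrow> (nat \<Rightarrow> 'a) set" where
  "EE A I = {\<sigma>. \<forall>i\<in>I. \<sigma> \<notin> A i}"

definition PS where
  "PS n m p vbl A S = {\<sigma>. Bad m A \<sigma> \<noteq> {} \<and> Res n m p vbl A \<sigma> = S}"

lemma supp_mu: "\<sigma> \<in> set_pmf (mu n p) \<Longrightarrow> \<forall>j<n. \<sigma> j \<in> set_pmf (p j)"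
  unfolding mu_def by (subst (asm) set_Pi_pmf) (auto simp: PiE_dflt_def)

lemma outside_disj:
  "i \<notin> Gamma_plus m vbl S \<Longrightarrow> i < m \<Longrightarrow> vbl i \<inter> vbls vbl S = {}"
  unfolding Gamma_plus_def bdry_def adj_def vbls_def by auto

context
  fixes n m :: nat and p :: "nat \<Rightarrow> 'a pmf" and vbl :: "nat \<Rightarrow> nat set"
    and A :: "nat \<Rightarrow> (nat \<Rightarrow> 'a) set"
  assumes vbl_sub: "\<forall>i<m. vbl i \<subseteq> {..<n}"
    and determined: "\<forall>i<m. \<forall>\<sigma> \<tau>. (\<forall>j\<in>vbl i. \<sigma> j = \<tau> j) \<longrightarrow> (\<sigma> \<in> A i \<longleftrightarrow> \<tau> \<in> A i)"
begin

lemma factor: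
  fixes S :: "nat set" and I :: "nat set"
  assumes I: "I \<subseteq> {..<m}"
  defines "C \<equiv> {\<sigma>. \<exists>\<rho> \<in> set_pmf (mu n p) \<inter> (EE A I \<inter> PS n m p vbl A S). \<forall>j\<in>vbls vbl S. \<sigma> j = \<rho> j}"
  shows "set_pmf (mu n p) \<inter> (EE A I \<inter> PS n m p vbl A S) =
         set_pmf (mu n p) \<inter> (C \<inter> EE A ({..<m} - Gamma_plus m vbl S))"
proof (intro set_eqI iffI)
  fix \<sigma> assume \<sigma>: "\<sigma> \<in> set_pmf (mu n p) \<inter> (EE A I \<inter> PS n m p vbl A S)"
  have "\<sigma> \<in> C" using \<sigma> unfolding C_def by blast
  moreover have "\<sigma> \<in> EE A ({..<m} - Gamma_plus m vbl S)"
  proof -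
    { fix i assume i: "i \<in> {..<m} - Gamma_plus m vbl S" "\<sigma> \<in> A i"
      then have "i \<in> Bad m A \<sigma>" by (simp add: Bad_def)
      then have "i \<in> S" using Res_props(1)[where n=n and m=m and p=p and vbl=vbl and A=A and \<sigma>=\<sigma>] \<sigma> by (auto simp: PS_def)
      then have False using i by (simp add: Gamma_plus_def) }
    then show ?thesis by (auto simp: EE_def)
  qed
  ultimately show "\<sigma> \<in> set_pmf (mu n p) \<inter> (C \<inter> EE A ({..<m} - Gamma_plus m vbl S))" using \<sigma> by blast
next
  fix \<sigma> assume \<sigma>: "\<sigma> \<in> set_pmf (mu n p) \<inter> (C \<inter> EE A ({..<m} - Gamma_plus m vbl S))"
  then obtain \<rho> where \<rho>: "\<rho> \<in> set_pmf (mu n p)" "\<rho> \<in> EE A I" "\<rho> \<in> PS n m p vbl A S"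
    and agree: "\<forall>j\<in>vbls vbl S. \<sigma> j = \<rho> j" unfolding C_def by blast
  have R0: "Res n m p vbl A \<rho> = S" and B0: "Bad m A \<rho> \<noteq> {}" using \<rho>(3) by (auto simp: PS_def)
  have Sm: "S \<subseteq> {..<m}" using Res_props(2)[where n=n and m=m and p=p and vbl=vbl and A=A and \<sigma>=\<rho>] R0 by simp
  have supp: "\<forall>j<n. \<sigma> j \<in> set_pmf (p j)" using \<sigma> supp_mu by blast
  have F: "\<sigma> \<in> EE A ({..<m} - Gamma_plus m vbl S)" using \<sigma> by blast
  have inS: "\<sigma> \<in> A i \<longleftrightarrow> \<rho> \<in> A i" if "i \<in> S" for i
  proof -
    have "i < m" using that Sm by blast
    moreover have "\<forall>j\<in>vbl i. \<sigma> j = \<rho> j" using agree that by (auto simp: vbls_def)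
    ultimately show ?thesis using determined by blast
  qed
  have inB: "\<sigma> \<notin> A i" if "i \<in> bdry m vbl S" for i
    using that R0 supp agree by (intro Res_bdry_not[where n=n and m=m and p=p and vbl=vbl and A=A and \<rho>=\<rho>]) auto
  have inB0: "\<rho> \<notin> A i" if "i \<in> bdry m vbl S" for i
    using that R0 supp_mu[OF \<rho>(1)] by (intro Res_bdry_not[where n=n and m=m and p=p and vbl=vbl and A=A and \<rho>=\<rho>]) auto
  have out: "\<sigma> \<notin> A i" if "i < m" "i \<notin> Gamma_plus m vbl S" for i
    using F that by (auto simp: EE_def)
  have out0: "\<rho> \<notin> A i" if "i < m" "i \<notin> Gamma_plus m vbl S" for i
  proof
    assume "\<rho> \<in> A i"
    then have "i \<in> Bad m A \<rho>" using that by (simp add: Bad_def)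
    then have "i \<in> S" using Res_props(1)[where n=n and m=m and p=p and vbl=vbl and A=A and \<sigma>=\<rho>] R0 by auto
    then show False using that by (simp add: Gamma_plus_def)
  qed
  have cls: "i \<in> S \<or> i \<in> bdry m vbl S \<or> i \<notin> Gamma_plus m vbl S" for i
    by (auto simp: Gamma_plus_def)
  have Bad_eq: "Bad m A \<sigma> = Bad m A \<rho>"
  proof -
    { fix i assume "i < m"
      then have "\<sigma> \<in> A i \<longleftrightarrow> \<rho> \<in> A i"
        using cls[of i] inS[of i] inB[of i] inB0[of i] out[of i] out0[of i] by blast }
    then show ?thesis by (auto simp: Bad_def)
  qed
  have Res_eq: "Res n m p vbl A \<sigma> = S"
    using Res_loc[where n=n and m=m and p=p and vbl=vbl and A=A and \<sigma>=\<sigma> and \<rho>=\<rho>] Bad_eq agree R0 by simp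
  have "\<sigma> \<in> EE A I"
  proof -
    { fix i assume i: "i \<in> I" "\<sigma> \<in> A i"
      have "i < m" using i I by blast
      have "\<rho> \<notin> A i" using \<rho>(2) i by (auto simp: EE_def)
      then have False
        using cls[of i] inS[of i] inB[of i] out[of i] i \<open>i < m\<close> by blast }
    then show ?thesis by (auto simp: EE_def)
  qed
  moreover have "\<sigma> \<in> PS n m p vbl A S" using Res_eq Bad_eq B0 by (simp add: PS_def)
  ultimately show "\<sigma> \<in> set_pmf (mu n p) \<inter> (EE A I \<inter> PS n m p vbl A S)" using \<sigma> by blast
qed

lemma core_step:
  assumes I: "I \<subseteq> {..<m}" and ne: "set_pmf (mu n p) \<inter> (EE A I \<inter> PS n m p vbl A S) \<noteq> {}"
  shows "bind_pmf (cond_pmf (mu n p) (EE A I \<inter> PS n m p vbl A S)) (gprs_step n m p vbl A)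
       = cond_pmf (mu n p) (EE A ({..<m} - Gamma_plus m vbl S))"
proof -
  define C where "C = {\<sigma>. \<exists>\<rho> \<in> set_pmf (mu n p) \<inter> (EE A I \<inter> PS n m p vbl A S). \<forall>j\<in>vbls vbl S. \<sigma> j = \<rho> j}"
  define F where "F = EE A ({..<m} - Gamma_plus m vbl S)"
  have fac: "set_pmf (mu n p) \<inter> (EE A I \<inter> PS n m p vbl A S) = set_pmf (mu n p) \<inter> (C \<inter> F)"
    unfolding C_def F_def by (rule factor[OF I])
  obtain \<rho> where "\<rho> \<in> PS n m p vbl A S" using ne by blast
  then have "S \<subseteq> {..<m}" using Res_props(2)[where n=n and m=m and p=p and vbl=vbl and A=A and \<sigma>=\<rho>] by (auto simp: PS_def)
  then have V: "vbls vbl S \<subseteq> {..<n}" using vbl_sub by (auto simp: vbls_def)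
  have Cdep: "\<sigma> \<in> C \<longleftrightarrow> \<sigma>' \<in> C" if "\<forall>j\<in>vbls vbl S. \<sigma> j = \<sigma>' j" for \<sigma> \<sigma>'
    using that unfolding C_def by auto
  have Fdep: "\<sigma> \<in> F \<longleftrightarrow> \<sigma>' \<in> F" if "\<forall>j. j \<notin> vbls vbl S \<longrightarrow> \<sigma> j = \<sigma>' j" for \<sigma> \<sigma>'
  proof -
    { fix i assume i: "i < m" "i \<notin> Gamma_plus m vbl S"
      then have "\<forall>j\<in>vbl i. \<sigma> j = \<sigma>' j" using outside_disj[OF i(2,1)] that by blast
      then have "\<sigma> \<in> A i \<longleftrightarrow> \<sigma>' \<in> A i" using determined i(1) by blast }
    then show ?thesis unfolding F_def EE_def by auto
  qed
  have ne': "set_pmf (mu n p) \<inter> (C \<inter> F) \<noteq> {}" using ne fac by simp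
  have "bind_pmf (cond_pmf (mu n p) (EE A I \<inter> PS n m p vbl A S)) (gprs_step n m p vbl A)
      = bind_pmf (cond_pmf (mu n p) (EE A I \<inter> PS n m p vbl A S))
          (\<lambda>\<sigma>. map_pmf (\<lambda>\<tau> j. if j \<in> vbls vbl S then \<tau> j else \<sigma> j) (mu n p))"
  proof (intro bind_pmf_cong refl)
    fix \<sigma> assume "\<sigma> \<in> set_pmf (cond_pmf (mu n p) (EE A I \<inter> PS n m p vbl A S))"
    then have "\<sigma> \<in> PS n m p vbl A S" using set_cond_pmf[OF ne] by blast
    then show "gprs_step n m p vbl A \<sigma> = map_pmf (\<lambda>\<tau> j. if j \<in> vbls vbl S then \<tau> j else \<sigma> j) (mu n p)"
      by (simp add: gprs_step_def PS_def)
  qed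
  also have "\<dots> = bind_pmf (cond_pmf (mu n p) (C \<inter> F))
          (\<lambda>\<sigma>. map_pmf (\<lambda>\<tau> j. if j \<in> vbls vbl S then \<tau> j else \<sigma> j) (mu n p))"
    using cond_pmf_cong_set[OF fac ne] by simp
  also have "\<dots> = cond_pmf (mu n p) F"
    by (rule core_resample[OF V Cdep Fdep ne'])
  finally show ?thesis unfolding F_def .
qed

end


lemma run_len: "xs \<in> set_pmf (gprs_run n m p vbl A k) \<Longrightarrow> length xs = Suc k"
  by (induction k arbitrary: xs) auto

lemma log_0: "log_event n m p vbl A 0 S = UNIV"
  by (simp add: log_event_def)

lemma log_snoc:
  assumes "length xs = Suc k"
  shows "(xs @ [\<sigma>] \<in> log_event n m p vbl A (Suc k) S) \<longleftrightarrow>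
         xs \<in> log_event n m p vbl A k S \<and> last xs \<in> PS n m p vbl A (S (Suc k))"
proof -
  have nth: "(xs @ [\<sigma>]) ! (t - 1) = xs ! (t - 1)" if "t \<in> {1..Suc k}" for t
    using that assms by (auto simp: nth_append)
  have "xs \<noteq> []" using assms by auto
  then have lst: "xs ! (Suc k - 1) = last xs" using assms by (simp add: last_conv_nth)
  have "(xs @ [\<sigma>] \<in> log_event n m p vbl A (Suc k) S) \<longleftrightarrow>
     (\<forall>t\<in>{1..Suc k}. Bad m A (xs ! (t - 1)) \<noteq> {} \<and> Res n m p vbl A (xs ! (t - 1)) = S t)"
    unfolding log_event_def using nth by simp
  also have "\<dots> \<longleftrightarrow> (\<forall>t\<in>{1..k}. Bad m A (xs ! (t - 1)) \<noteq> {} \<and> Res n m p vbl A (xs ! (t - 1)) = S t)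
      \<and> (Bad m A (xs ! (Suc k - 1)) \<noteq> {} \<and> Res n m p vbl A (xs ! (Suc k - 1)) = S (Suc k))"
    by (auto simp: atLeastAtMostSuc_conv)
  finally show ?thesis unfolding lst by (simp add: log_event_def PS_def)
qed

definition Ik where "Ik m vbl S k = (if k = 0 then {} else {..<m} - Gamma_plus m vbl (S k))"

context
  fixes n m :: nat and p :: "nat \<Rightarrow> 'a pmf" and vbl :: "nat \<Rightarrow> nat set"
    and A :: "nat \<Rightarrow> (nat \<Rightarrow> 'a) set"
  assumes vbl_sub: "\<forall>i<m. vbl i \<subseteq> {..<n}"
    and determined: "\<forall>i<m. \<forall>\<sigma> \<tau>. (\<forall>j\<in>vbl i. \<sigma> j = \<tau> j) \<longrightarrow> (\<sigma> \<in> A i \<longleftrightarrow> \<tau> \<in> A i)"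
begin

lemma PS_sub_F:
  "\<sigma> \<in> PS n m p vbl A S \<Longrightarrow> \<sigma> \<in> EE A ({..<m} - Gamma_plus m vbl S)"
proof -
  assume \<sigma>: "\<sigma> \<in> PS n m p vbl A S"
  { fix i assume i: "i \<in> {..<m} - Gamma_plus m vbl S" "\<sigma> \<in> A i"
    then have "i \<in> Bad m A \<sigma>" by (simp add: Bad_def)
    then have "i \<in> S" using Res_props(1)[where n=n and m=m and p=p and vbl=vbl and A=A and \<sigma>=\<sigma>] \<sigma> by (auto simp: PS_def)
    then have False using i by (simp add: Gamma_plus_def) }
  then show ?thesis by (auto simp: EE_def)
qed

lemma main_ind:
  "set_pmf (gprs_run n m p vbl A k) \<inter> log_event n m p vbl A k S \<noteq> {} \<Longrightarrow>
   set_pmf (mu n p) \<inter> EE A (Ik m vbl S k) \<noteq> {} \<and>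
   map_pmf last (cond_pmf (gprs_run n m p vbl A k) (log_event n m p vbl A k S)) =
   cond_pmf (mu n p) (EE A (Ik m vbl S k))"
proof (induction k)
  case 0
  have E: "EE A (Ik m vbl S 0) = UNIV" by (simp add: EE_def Ik_def)
  have "set_pmf (mu n p) \<noteq> {}" by (rule set_pmf_not_empty)
  then show ?case unfolding E
    by (simp add: log_0 cond_pmf_UNIV map_pmf_comp)
next
  case (Suc k)
  let ?R = "gprs_run n m p vbl A k" and ?L = "log_event n m p vbl A k S"
  let ?P = "PS n m p vbl A (S (Suc k))"
  let ?K = "\<lambda>xs. gprs_step n m p vbl A (last xs)"
  let ?L' = "?L \<inter> last -` ?P"
  let ?E = "EE A (Ik m vbl S k)"
  have pref: "\<forall>xs\<in>set_pmf ?R. \<forall>\<sigma>. (xs @ [\<sigma>] \<in> log_event n m p vbl A (Suc k) S \<longleftrightarrow> xs \<in> ?L')"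
  proof (intro ballI allI)
    fix xs \<sigma> assume "xs \<in> set_pmf ?R"
    then have "length xs = Suc k" by (rule run_len)
    then show "(xs @ [\<sigma>] \<in> log_event n m p vbl A (Suc k) S \<longleftrightarrow> xs \<in> ?L')"
      by (simp add: log_snoc)
  qed
  have run: "gprs_run n m p vbl A (Suc k) = bind_pmf ?R (\<lambda>xs. map_pmf (\<lambda>\<sigma>. xs @ [\<sigma>]) (?K xs))"
    by simp
  obtain ys where ys: "ys \<in> set_pmf (gprs_run n m p vbl A (Suc k))" "ys \<in> log_event n m p vbl A (Suc k) S"
    using Suc.prems by blast
  then obtain xs \<sigma> where xs: "xs \<in> set_pmf ?R" "ys = xs @ [\<sigma>]" unfolding run by auto
  have xsL: "xs \<in> ?L'" using pref xs ys by blast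
  have ne': "set_pmf ?R \<inter> ?L' \<noteq> {}" using xs xsL by blast
  have neL: "set_pmf ?R \<inter> ?L \<noteq> {}" using ne' by blast
  have IH: "map_pmf last (cond_pmf ?R ?L) = cond_pmf (mu n p) ?E"
    and neE: "set_pmf (mu n p) \<inter> ?E \<noteq> {}"
    using Suc.IH[OF neL] by auto
  have "last xs \<in> set_pmf (map_pmf last (cond_pmf ?R ?L)) \<inter> ?P"
    using xs xsL set_cond_pmf[OF neL] by auto
  then have lx: "last xs \<in> set_pmf (mu n p) \<inter> ?E \<inter> ?P"
    unfolding IH set_cond_pmf[OF neE] by blast
  then have ne2: "set_pmf (mu n p) \<inter> ?E \<inter> ?P \<noteq> {}" by blast
  have c1: "cond_pmf (gprs_run n m p vbl A (Suc k)) (log_event n m p vbl A (Suc k) S)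
      = bind_pmf (cond_pmf ?R ?L') (\<lambda>xs. map_pmf (\<lambda>\<sigma>. xs @ [\<sigma>]) (?K xs))"
    unfolding run by (rule cond_bind_prefix[OF pref ne'])
  have cc: "cond_pmf ?R ?L' = cond_pmf (cond_pmf ?R ?L) (last -` ?P)"
  proof -
    have "set_pmf ?R \<inter> ?L \<inter> last -` ?P \<noteq> {}" using ne' by (simp add: Int_assoc)
    then show ?thesis by (simp add: cond_cond_pmf)
  qed
  have cm: "map_pmf last (cond_pmf (cond_pmf ?R ?L) (last -` ?P)) = cond_pmf (map_pmf last (cond_pmf ?R ?L)) ?P"
  proof -
    have "set_pmf (cond_pmf ?R ?L) \<inter> last -` ?P \<noteq> {}"
      using ne' set_cond_pmf[OF neL] by auto
    then show ?thesis by (simp add: cond_map_pmf)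
  qed
  have "map_pmf last (cond_pmf (gprs_run n m p vbl A (Suc k)) (log_event n m p vbl A (Suc k) S))
      = bind_pmf (cond_pmf ?R ?L') ?K"
    unfolding c1 map_bind_pmf map_pmf_comp by simp
  also have "\<dots> = bind_pmf (map_pmf last (cond_pmf ?R ?L')) (gprs_step n m p vbl A)"
    by (simp add: bind_map_pmf)
  also have "\<dots> = bind_pmf (cond_pmf (map_pmf last (cond_pmf ?R ?L)) ?P) (gprs_step n m p vbl A)"
    by (simp only: cc cm)
  also have "\<dots> = bind_pmf (cond_pmf (cond_pmf (mu n p) ?E) ?P) (gprs_step n m p vbl A)"
    by (simp only: IH)
  also have "\<dots> = bind_pmf (cond_pmf (mu n p) (?E \<inter> ?P)) (gprs_step n m p vbl A)"
    by (simp only: cond_cond_pmf[OF ne2])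
  also have "\<dots> = cond_pmf (mu n p) (EE A ({..<m} - Gamma_plus m vbl (S (Suc k))))"
  proof (rule core_step[OF vbl_sub determined])
    show "Ik m vbl S k \<subseteq> {..<m}" by (auto simp: Ik_def)
    show "set_pmf (mu n p) \<inter> (?E \<inter> ?P) \<noteq> {}" using ne2 by (simp add: Int_assoc)
  qed
  finally have eq: "map_pmf last (cond_pmf (gprs_run n m p vbl A (Suc k)) (log_event n m p vbl A (Suc k) S))
      = cond_pmf (mu n p) (EE A ({..<m} - Gamma_plus m vbl (S (Suc k))))" .
  have "last xs \<in> EE A ({..<m} - Gamma_plus m vbl (S (Suc k)))"
    using lx PS_sub_F by blast
  then have "set_pmf (mu n p) \<inter> EE A ({..<m} - Gamma_plus m vbl (S (Suc k))) \<noteq> {}"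
    using lx by blast
  then show ?case using eq by (simp add: Ik_def)
qed

end


theorem lemma25:
  fixes n m :: nat and p :: "nat \<Rightarrow> 'a pmf" and vbl :: "nat \<Rightarrow> nat set"
    and A :: "nat \<Rightarrow> (nat \<Rightarrow> 'a) set" and l :: nat and S :: "nat \<Rightarrow> nat set"
  assumes vbl_sub: "\<forall>i<m. vbl i \<subseteq> {..<n}"
    and determined: "\<forall>i<m. \<forall>\<sigma> \<tau>. (\<forall>j\<in>vbl i. \<sigma> j = \<tau> j) \<longrightarrow> (\<sigma> \<in> A i \<longleftrightarrow> \<tau> \<in> A i)"
    and l_pos: "l \<ge> 1"
    and possible: "measure_pmf.prob (gprs_run n m p vbl A l) (log_event n m p vbl A l S) > 0"
  shows "map_pmf last (cond_pmf (gprs_run n m p vbl A l) (log_event n m p vbl A l S)) =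
         cond_pmf (mu n p) {\<sigma>. \<forall>i \<in> {..<m} - Gamma_plus m vbl (S l). \<sigma> \<notin> A i}"
proof -
  have ne: "set_pmf (gprs_run n m p vbl A l) \<inter> log_event n m p vbl A l S \<noteq> {}"
  proof -
    have "measure_pmf.prob (gprs_run n m p vbl A l) (log_event n m p vbl A l S) \<noteq> 0"
      using possible by simp
    then show ?thesis unfolding measure_pmf_zero_iff .
  qed
  have "EE A (Ik m vbl S l) = {\<sigma>. \<forall>i \<in> {..<m} - Gamma_plus m vbl (S l). \<sigma> \<notin> A i}"
    using l_pos by (simp add: EE_def Ik_def)
  moreover have "map_pmf last (cond_pmf (gprs_run n m p vbl A l) (log_event n m p vbl A l S)) =
     cond_pmf (mu n p) (EE A (Ik m vbl S l))"
    using main_ind[OF vbl_sub determined ne] by (rule conjunct2)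
  ultimately show ?thesis by simp
qed


end
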